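(* Let $\Omega$ be a region of $\mathbb{C}$ and let $F:\Omega\to\mathbb{M}_n$ be analytic. The following statements are equivalent: (1) $F(z)$ is constant on $\Omega$; (2) for every $k=1,\ldots,n$, $s_k(F(z))$ is constant on $\Omega$; (3) for every $k=1,\ldots,n$, $s_k(F(z))$ attains its maximum value over $\Omega$ at some point $z_k\in\Omega$; (4) $\|F(z)\|_{\mathcal{F}}$ is constant on $\Omega$; (5) $\|F(z)\|_{\mathcal{F}}$ attains its maximum value over $\Omega$ at some point $z_0\in\Omega$.
   Context: A region is a nonempty open connected subset of $\mathbb{C}$. $\mathbb{M}_n$ is the set of $n\times n$ complex matrices; $F$ is analytic if each entry is analytic. For $A\in\mathbb{M}_n$, the singular values $s_1(A)\geq\cdots\geq s_n(A)$ are the nonnegative square roots of the eigenvalues of $A^*A$ in nonincreasing order. $\|T\|_{\mathcal{F}}=(\operatorname{trace}(T^*T))^{1/2}$ is the Frobenius (Hilbert--Schmidt) norm. *)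

theory Defs
  imports "HOL-Analysis.Complex_Analysis_Basics" "Jordan_Normal_Form.Schur_Decomposition"
begin

text \<open>Used only for the Hermitian positive semidefinite matrix A^* A, whose eigenvalues are real.\<close>
definition eigenvalues_desc :: "complex mat \<Rightarrow> real list" where
  "eigenvalues_desc A = rev (sorted_list_of_multiset (image_mset Re (proots (char_poly A))))"

definition singular_value :: "complex mat \<Rightarrow> nat \<Rightarrow> real" where
  "singular_value A k = sqrt (eigenvalues_desc (mat_adjoint A * A) ! (k - 1))"

definition mat_trace :: "complex mat \<Rightarrow> complex" where
  "mat_trace A = (\<Sum>i<dim_row A. A $$ (i, i))"

definition frobenius_norm :: "complex mat \<Rightarrow> real" where
  "frobenius_norm T = sqrt (Re (mat_trace (mat_adjoint T * T)))"

end

theory Submission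
  imports Defs "HOL-Complex_Analysis.Conformal_Mappings"
begin


lemma Re_cnj_mult_self: "Re (cnj a * a) = (cmod a)\<^sup>2"
proof -
  have "cnj a * a = complex_of_real ((cmod a)\<^sup>2)" using complex_norm_square[of a] by (simp add: mult.commute)
  then show ?thesis by simp
qed


lemma sumsq_max_const:
  fixes f :: "'i \<Rightarrow> complex \<Rightarrow> complex" and I :: "'i set"
  assumes fin: "finite I" and S: "open S" "connected S" and z0: "z0 \<in> S"
    and hol: "\<And>i. i \<in> I \<Longrightarrow> f i holomorphic_on S"
    and le: "\<And>z. z \<in> S \<Longrightarrow> (\<Sum>i\<in>I. (cmod (f i z))\<^sup>2) \<le> (\<Sum>i\<in>I. (cmod (f i z0))\<^sup>2)"
  shows "\<And>z i. z \<in> S \<Longrightarrow> i \<in> I \<Longrightarrow> f i z = f i z0"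
proof -
  define g where "g z = (\<Sum>i\<in>I. cnj (f i z0) * f i z)" for z
  have holg: "g holomorphic_on S" unfolding g_def
    by (intro holomorphic_on_sum holomorphic_on_mult holomorphic_on_const hol)
  have reg: "Re (g z) \<le> Re (g z0)" if "z \<in> S" for z
  proof -
    have "Re (g z) = (\<Sum>i\<in>I. Re (cnj (f i z0) * f i z))" by (simp add: g_def)
    also have "\<dots> \<le> (\<Sum>i\<in>I. ((cmod (f i z))\<^sup>2 + (cmod (f i z0))\<^sup>2) / 2)"
    proof (rule sum_mono)
      fix i
      have "0 \<le> (cmod (f i z - f i z0))\<^sup>2" by simp
      also have "(cmod (f i z - f i z0))\<^sup>2 = (cmod (f i z))\<^sup>2 + (cmod (f i z0))\<^sup>2 - 2 * Re (cnj (f i z0) * f i z)"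
        unfolding cmod_power2 by (simp add: power2_eq_square algebra_simps)
      finally show "Re (cnj (f i z0) * f i z) \<le> ((cmod (f i z))\<^sup>2 + (cmod (f i z0))\<^sup>2) / 2" by simp
    qed
    also have "\<dots> = ((\<Sum>i\<in>I. (cmod (f i z))\<^sup>2) + (\<Sum>i\<in>I. (cmod (f i z0))\<^sup>2)) / 2"
      by (simp add: sum.distrib flip: sum_divide_distrib)
    also have "\<dots> \<le> (\<Sum>i\<in>I. (cmod (f i z0))\<^sup>2)" using le[OF that] by simp
    also have "\<dots> = Re (g z0)" unfolding g_def Re_sum
      by (intro sum.cong refl) (simp only: Re_cnj_mult_self)
    finally show ?thesis .
  qed
  have "(\<lambda>z. exp (g z)) constant_on S"
  proof (rule maximum_modulus_principle[OF _ S S(1) order_refl z0])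
    show "(\<lambda>z. exp (g z)) holomorphic_on S" using holg by (intro holomorphic_on_compose_gen[unfolded o_def, OF holg] holomorphic_on_exp) (auto intro: holomorphic_intros)
    show "cmod (exp (g z)) \<le> cmod (exp (g z0))" if "z \<in> S" for z
      using reg[OF that] by simp
  qed
  then have ge: "Re (g z) = Re (g z0)" if "z \<in> S" for z
    using that z0 unfolding constant_on_def
    by (metis norm_exp_eq_Re exp_inj_iff)
  fix z i assume z: "z \<in> S" and i: "i \<in> I"
  have "(\<Sum>i\<in>I. (cmod (f i z - f i z0))\<^sup>2) = (\<Sum>i\<in>I. (cmod (f i z))\<^sup>2) + (\<Sum>i\<in>I. (cmod (f i z0))\<^sup>2) - 2 * Re (g z)"
  proof -
    have "(\<Sum>i\<in>I. (cmod (f i z - f i z0))\<^sup>2) = (\<Sum>i\<in>I. (cmod (f i z))\<^sup>2 + (cmod (f i z0))\<^sup>2 - 2 * Re (cnj (f i z0) * f i z))"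
      unfolding cmod_power2 by (intro sum.cong refl) (simp add: power2_eq_square algebra_simps)
    also have "\<dots> = (\<Sum>i\<in>I. (cmod (f i z))\<^sup>2) + (\<Sum>i\<in>I. (cmod (f i z0))\<^sup>2) - 2 * Re (g z)"
      by (simp add: sum.distrib sum_subtractf g_def Re_sum sum_distrib_left)
    finally show ?thesis .
  qed
  also have "Re (g z) = (\<Sum>i\<in>I. (cmod (f i z0))\<^sup>2)" 
  proof -
    have "Re (g z0) = (\<Sum>i\<in>I. (cmod (f i z0))\<^sup>2)" unfolding g_def Re_sum
      by (intro sum.cong refl) (simp only: Re_cnj_mult_self)
    then show ?thesis using ge[OF z] by linarith
  qed
  finally have "(\<Sum>i\<in>I. (cmod (f i z - f i z0))\<^sup>2) \<le> 0" using le[OF z] by simp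
  then have "(\<Sum>i\<in>I. (cmod (f i z - f i z0))\<^sup>2) = 0" by (meson order_antisym sum_nonneg zero_le_power2)
  then have "(cmod (f i z - f i z0))\<^sup>2 = 0" using sum_nonneg_eq_0_iff[OF fin, of "\<lambda>i. (cmod (f i z - f i z0))\<^sup>2"] i by simp
  then show "f i z = f i z0" by simp
qed



lemma mult_index_sum:
  assumes "A \<in> carrier_mat n m" "B \<in> carrier_mat m p" "i < n" "j < p"
  shows "(A * B) $$ (i,j) = (\<Sum>l<m. A $$ (i,l) * B $$ (l,j))"
proof -
  have "(A * B) $$ (i,j) = row A i \<bullet> col B j" using assms by simp
  also have "\<dots> = (\<Sum>l\<in>{0..<m}. row A i $ l * col B j $ l)" using assms by (simp add: scalar_prod_def)
  also have "\<dots> = (\<Sum>l<m. A $$ (i,l) * B $$ (l,j))" 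
    by (rule sum.cong) (use assms in auto)
  finally show ?thesis .
qed

lemma adj_dims[simp]: "dim_row (mat_adjoint A) = dim_col A" "dim_col (mat_adjoint A) = dim_row A"
  by (auto simp: mat_adjoint_def)

lemma adj_index[simp]: "i < dim_col A \<Longrightarrow> j < dim_row A \<Longrightarrow> mat_adjoint A $$ (i,j) = cnj (A $$ (j,i))"
  by (auto simp: mat_adjoint_def mat_of_rows_index)

lemma adj_carrier: "A \<in> carrier_mat n m \<Longrightarrow> mat_adjoint (A :: complex mat) \<in> carrier_mat m n"
  unfolding carrier_mat_def by simp

lemma adj_adj[simp]: "mat_adjoint (mat_adjoint (A :: complex mat)) = A"
  by (rule eq_matI) auto

lemma adj_mult:
  assumes "(A :: complex mat) \<in> carrier_mat n m" "B \<in> carrier_mat m p"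
  shows "mat_adjoint (A * B) = mat_adjoint B * mat_adjoint A"
proof (rule eq_matI)
  fix i j assume ij: "i < dim_row (mat_adjoint B * mat_adjoint A)" "j < dim_col (mat_adjoint B * mat_adjoint A)"
  then have i: "i < p" and j: "j < n" using assms by auto
  have "mat_adjoint (A * B) $$ (i,j) = cnj ((A * B) $$ (j,i))" using assms i j by simp
  also have "\<dots> = (\<Sum>l<m. cnj (A $$ (j,l)) * cnj (B $$ (l,i)))"
    by (simp add: mult_index_sum[OF assms j i])
  also have "\<dots> = (mat_adjoint B * mat_adjoint A) $$ (i,j)"
    using assms i j by (subst mult_index_sum[of _ p m _ n]) (simp_all add: mult.commute adj_carrier)
  finally show "mat_adjoint (A * B) $$ (i, j) = (mat_adjoint B * mat_adjoint A) $$ (i, j)" .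
qed (insert assms, simp_all)

lemma adj_one[simp]: "mat_adjoint (1\<^sub>m n :: complex mat) = 1\<^sub>m n"
  by (rule eq_matI) auto

definition fro2 :: "complex mat \<Rightarrow> real" where
  "fro2 M = (\<Sum>i<dim_row M. \<Sum>j<dim_col M. (cmod (M $$ (i,j)))\<^sup>2)"

lemma trace_adj_mult_self: "Re (mat_trace (mat_adjoint T * T)) = fro2 T"
proof -
  have d: "dim_row (mat_adjoint T * T) = dim_col T" by simp
  have "Re (mat_trace (mat_adjoint T * T)) = (\<Sum>i<dim_col T. Re ((mat_adjoint T * T) $$ (i,i)))"
    unfolding mat_trace_def by (simp only: Re_sum index_mult_mat(2) adj_dims)
  also have "\<dots> = (\<Sum>i<dim_col T. \<Sum>l<dim_row T. (cmod (T $$ (l,i)))\<^sup>2)"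
  proof (intro sum.cong refl)
    fix i assume i: "i \<in> {..<dim_col T}"
    have "(mat_adjoint T * T) $$ (i,i) = (\<Sum>l<dim_row T. mat_adjoint T $$ (i,l) * T $$ (l,i))"
      by (rule mult_index_sum[OF adj_carrier[OF carrier_mat_triv] carrier_mat_triv]) (use i in simp_all)
    also have "\<dots> = (\<Sum>l<dim_row T. cnj (T $$ (l,i)) * T $$ (l,i))"
      using i by (intro sum.cong refl) simp
    finally show "Re ((mat_adjoint T * T) $$ (i,i)) = (\<Sum>l<dim_row T. (cmod (T $$ (l,i)))\<^sup>2)"
      by (simp only: Re_sum Re_cnj_mult_self)
  qed
  also have "\<dots> = fro2 T" unfolding fro2_def by (rule sum.swap)
  finally show ?thesis .
qed

lemma frob_fro2: "frobenius_norm T = sqrt (fro2 T)"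
  unfolding frobenius_norm_def trace_adj_mult_self ..



definition bext :: "complex \<Rightarrow> complex mat \<Rightarrow> complex mat" where
  "bext c M = mat (Suc (dim_row M)) (Suc (dim_row M))
     (\<lambda>(i,j). if i = 0 \<and> j = 0 then c else if i = 0 \<or> j = 0 then 0 else M $$ (i - 1, j - 1))"

lemma bext_dims[simp]: "dim_row (bext c M) = Suc (dim_row M)" "dim_col (bext c M) = Suc (dim_row M)"
  by (simp_all add: bext_def)

lemma bext_carrier: "M \<in> carrier_mat m m \<Longrightarrow> bext c M \<in> carrier_mat (Suc m) (Suc m)"
  unfolding carrier_mat_def by simp

lemma bext_index:
  "i < Suc (dim_row M) \<Longrightarrow> j < Suc (dim_row M) \<Longrightarrow> bext c M $$ (i,j) =
     (if i = 0 \<and> j = 0 then c else if i = 0 \<or> j = 0 then 0 else M $$ (i - 1, j - 1))"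
  by (simp add: bext_def)

lemma bext_00[simp]: "bext c M $$ (0,0) = c" by (simp add: bext_def)
lemma bext_0S[simp]: "j < dim_row M \<Longrightarrow> bext c M $$ (0, Suc j) = 0" by (simp add: bext_def)
lemma bext_S0[simp]: "i < dim_row M \<Longrightarrow> bext c M $$ (Suc i, 0) = 0" by (simp add: bext_def)
lemma bext_SS[simp]: "i < dim_row M \<Longrightarrow> j < dim_row M \<Longrightarrow> bext c M $$ (Suc i, Suc j) = M $$ (i,j)"
  by (simp add: bext_def)

lemma bext_mult:
  assumes A: "A \<in> carrier_mat m m" and B: "B \<in> carrier_mat m m"
  shows "bext a A * bext b B = bext (a * b) (A * B)"
proof (rule eq_matI)
  have dA: "dim_row A = m" "dim_col A = m" and dB: "dim_row B = m" "dim_col B = m" using A B by auto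
  fix i j assume "i < dim_row (bext (a * b) (A * B))" "j < dim_col (bext (a * b) (A * B))"
  then have i: "i < Suc m" and j: "j < Suc m" using dA by auto
  have "(bext a A * bext b B) $$ (i,j) = (\<Sum>l<Suc m. bext a A $$ (i,l) * bext b B $$ (l,j))"
    by (rule mult_index_sum[OF bext_carrier[OF A] bext_carrier[OF B] i j])
  also have "\<dots> = bext a A $$ (i,0) * bext b B $$ (0,j) + (\<Sum>l<m. bext a A $$ (i,Suc l) * bext b B $$ (Suc l,j))"
    by (rule sum.lessThan_Suc_shift)
  also have "\<dots> = bext (a * b) (A * B) $$ (i,j)"
  proof (cases i)
    case 0
    then show ?thesis
    proof (cases j)
      case 0
      then show ?thesis using \<open>i = 0\<close> dA dB by simp
    next
      case (Suc j')
      then show ?thesis using \<open>i = 0\<close> dA dB j by simp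
    qed
  next
    case (Suc i')
    then show ?thesis
    proof (cases j)
      case 0
      then show ?thesis using \<open>i = Suc i'\<close> dA dB i by simp
    next
      case (Suc j')
      have "(A * B) $$ (i', j') = (\<Sum>l<m. A $$ (i',l) * B $$ (l,j'))"
        by (rule mult_index_sum[OF A B]) (use i j \<open>i = Suc i'\<close> Suc in auto)
      then show ?thesis using \<open>i = Suc i'\<close> Suc dA dB i j by simp
    qed
  qed
  finally show "(bext a A * bext b B) $$ (i,j) = bext (a * b) (A * B) $$ (i,j)" .
qed (use A B in simp_all)

lemma adj_bext:
  assumes "M \<in> carrier_mat m m"
  shows "mat_adjoint (bext c M) = bext (cnj c) (mat_adjoint M)"
proof (rule eq_matI)
  fix i j assume "i < dim_row (bext (cnj c) (mat_adjoint M))" "j < dim_col (bext (cnj c) (mat_adjoint M))"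
  then have i: "i < Suc m" and j: "j < Suc m" using assms by auto
  show "mat_adjoint (bext c M) $$ (i, j) = bext (cnj c) (mat_adjoint M) $$ (i, j)"
    using i j assms by (cases i; cases j) auto
qed (use assms in simp_all)

lemma bext_one: "bext 1 (1\<^sub>m m) = 1\<^sub>m (Suc m)"
proof (rule eq_matI)
  fix i j assume "i < dim_row (1\<^sub>m (Suc m) :: complex mat)" "j < dim_col (1\<^sub>m (Suc m) :: complex mat)"
  then have i: "i < Suc m" and j: "j < Suc m" by auto
  show "bext 1 (1\<^sub>m m) $$ (i, j) = 1\<^sub>m (Suc m) $$ (i, j)"
    using i j by (cases i; cases j) auto
qed simp_all

definition dg :: "complex list \<Rightarrow> complex mat" where
  "dg es = mat (length es) (length es) (\<lambda>(i,j). if i = j then es ! i else 0)"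

lemma dg_carrier: "dg es \<in> carrier_mat (length es) (length es)"
  unfolding carrier_mat_def dg_def by simp

lemma dg_Cons: "dg (e # es) = bext e (dg es)"
proof (rule eq_matI)
  fix i j assume "i < dim_row (bext e (dg es))" "j < dim_col (bext e (dg es))"
  then have i: "i < Suc (length es)" and j: "j < Suc (length es)" by (auto simp: dg_def)
  show "dg (e # es) $$ (i, j) = bext e (dg es) $$ (i, j)"
    using i j by (cases i; cases j) (auto simp: dg_def)
qed (simp_all add: dg_def)

lemma char_poly_bext:
  assumes M: "M \<in> carrier_mat m m"
  shows "char_poly (bext e M) = [:-e, 1:] * char_poly M"
proof -
  have eq: "bext e M = four_block_mat (mat 1 1 (\<lambda>_. e)) (0\<^sub>m 1 m) (0\<^sub>m m 1) M"
  proof (rule eq_matI)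
    fix i j assume "i < dim_row (four_block_mat (mat 1 1 (\<lambda>_. e)) (0\<^sub>m 1 m) (0\<^sub>m m 1) M)"
      "j < dim_col (four_block_mat (mat 1 1 (\<lambda>_. e)) (0\<^sub>m 1 m) (0\<^sub>m m 1) M)"
    then have i: "i < Suc m" and j: "j < Suc m" using M by auto
    show "bext e M $$ (i, j) = four_block_mat (mat 1 1 (\<lambda>_. e)) (0\<^sub>m 1 m) (0\<^sub>m m 1) M $$ (i, j)"
      using i j M by (cases i; cases j) auto
  qed (use M in simp_all)
  have "char_poly (bext e M) = char_poly (mat 1 1 (\<lambda>_. e)) * char_poly M"
    unfolding eq by (rule char_poly_four_block_zeros_col) (use M in auto)
  also have "char_poly (mat 1 1 (\<lambda>_. e)) = [:-e, 1:]"
    by (simp add: char_poly_defs Determinant.det_def sign_def)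
  finally show ?thesis .
qed



definition vnorm2 :: "complex vec \<Rightarrow> real" where
  "vnorm2 v = (\<Sum>i<dim_vec v. (cmod (v $ i))\<^sup>2)"

lemma cscalar_sum:
  assumes "v \<in> carrier_vec n" "w \<in> carrier_vec n"
  shows "v \<bullet>c w = (\<Sum>l<n. v $ l * cnj (w $ l))"
  using assms by (auto simp: scalar_prod_def lessThan_atLeast0 intro: sum.cong)

lemma cscalar_self:
  assumes "v \<in> carrier_vec n"
  shows "v \<bullet>c v = complex_of_real (vnorm2 v)"
proof -
  have "v \<bullet>c v = (\<Sum>l<n. v $ l * cnj (v $ l))" by (rule cscalar_sum[OF assms assms])
  also have "\<dots> = (\<Sum>l<n. complex_of_real ((cmod (v $ l))\<^sup>2))"
    by (intro sum.cong refl) (metis complex_norm_square of_real_power)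
  also have "\<dots> = complex_of_real (vnorm2 v)" using assms by (simp add: vnorm2_def)
  finally show ?thesis .
qed

lemma vnorm2_nonneg: "vnorm2 v \<ge> 0" unfolding vnorm2_def by (simp add: sum_nonneg)

lemma unitary_ext:
  assumes u: "u \<in> carrier_vec n" and nu: "vnorm2 u = 1"
  shows "\<exists>W. W \<in> carrier_mat n n \<and> mat_adjoint W * W = 1\<^sub>m n \<and> (\<forall>i<n. W $$ (i,0) = u $ i)"
proof -
  have du: "dim_vec u = n" using u by auto
  have u0: "u \<noteq> 0\<^sub>v n"
  proof
    assume "u = 0\<^sub>v n"
    then have "vnorm2 u = 0" unfolding vnorm2_def by simp
    with nu show False by simp
  qed
  have n0: "n > 0"
  proof (rule ccontr)
    assume "\<not> n > 0" then have "n = 0" by simp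
    then have "vnorm2 u = 0" unfolding vnorm2_def using du by simp
    with nu show False by simp
  qed
  interpret cof_vec_space n "TYPE(complex)" .
  define b where "b = basis_completion u"
  note bc = basis_completion[OF u u0, folded b_def]
  define ws where "ws = gram_schmidt n b"
  note gs = gram_schmidt_result[OF bc(2) bc(4) bc(5) ws_def]
  from bc(6,7) n0 obtain vs where bv: "b = u # vs" by (cases b) auto
  have hdws: "hd ws = u" unfolding ws_def bv by (rule gram_schmidt_hd[OF u])
  have lws: "length ws = n" using gs(4) bc(6) by simp
  have wsc: "\<And>j. j < n \<Longrightarrow> ws ! j \<in> carrier_vec n" using gs(3) lws by auto
  have ws0: "ws ! 0 = u" using hdws n0 lws by (cases ws) auto
  define c where "c j = 1 / complex_of_real (sqrt (vnorm2 (ws ! j)))" for j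
  define ws' where "ws' = map (\<lambda>j. c j \<cdot>\<^sub>v ws ! j) [0..<n]"
  define W where "W = mat_of_cols n ws'"
  have lws': "length ws' = n" unfolding ws'_def by simp
  have ws'j: "\<And>j. j < n \<Longrightarrow> ws' ! j = c j \<cdot>\<^sub>v ws ! j" unfolding ws'_def by simp
  have W: "W \<in> carrier_mat n n" unfolding W_def using mat_of_cols_carrier(1)[of n ws'] lws' by simp
  have Wij: "W $$ (l,j) = c j * ws ! j $ l" if "l < n" "j < n" for l j
    unfolding W_def using that wsc[OF that(2)] by (simp add: mat_of_cols_index lws' ws'j)
  have nz: "vnorm2 (ws ! j) > 0" if "j < n" for j
  proof -
    have "ws ! j \<bullet>c ws ! j \<noteq> 0" using corthogonalD[OF gs(2)] that lws by auto
    then have "vnorm2 (ws ! j) \<noteq> 0" using cscalar_self[OF wsc[OF that]] by auto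
    then show ?thesis using vnorm2_nonneg[of "ws ! j"] by simp
  qed
  have "mat_adjoint W * W = 1\<^sub>m n"
  proof (rule eq_matI)
    fix i j assume "i < dim_row (1\<^sub>m n :: complex mat)" "j < dim_col (1\<^sub>m n :: complex mat)"
    then have i: "i < n" and j: "j < n" by auto
    have "(mat_adjoint W * W) $$ (i,j) = (\<Sum>l<n. mat_adjoint W $$ (i,l) * W $$ (l,j))"
      by (rule mult_index_sum[OF adj_carrier[OF W] W i j])
    also have "\<dots> = (\<Sum>l<n. cnj (c i) * c j * (ws ! j $ l * cnj (ws ! i $ l)))"
      using W i j by (intro sum.cong refl) (simp add: Wij)
    also have "\<dots> = cnj (c i) * c j * (ws ! j \<bullet>c ws ! i)"
      by (simp add: cscalar_sum[OF wsc[OF j] wsc[OF i]] sum_distrib_left)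
    also have "\<dots> = 1\<^sub>m n $$ (i,j)"
    proof (cases "i = j")
      case True
      have "cnj (c i) * c i * complex_of_real (vnorm2 (ws ! i)) = 1"
        using nz[OF i] unfolding c_def
        by (simp add: field_simps flip: of_real_mult)
      then show ?thesis using True i cscalar_self[OF wsc[OF i]] by simp
    next
      case False
      then have "ws ! j \<bullet>c ws ! i = 0" using corthogonalD[OF gs(2)] i j lws by auto
      then show ?thesis using False i j by simp
    qed
    finally show "(mat_adjoint W * W) $$ (i,j) = 1\<^sub>m n $$ (i,j)" .
  qed (use W in simp_all)
  moreover have "\<forall>i<n. W $$ (i,0) = u $ i"
  proof (intro allI impI)
    fix i assume i: "i < n"
    have "c 0 = 1" unfolding c_def ws0 nu by simp
    then show "W $$ (i,0) = u $ i" using Wij[OF i n0] ws0 by simp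
  qed
  ultimately show ?thesis using W by blast
qed



lemma vnorm2_smult: "vnorm2 (c \<cdot>\<^sub>v v) = (cmod c)\<^sup>2 * vnorm2 v"
  unfolding vnorm2_def by (simp add: sum_distrib_left norm_mult power_mult_distrib)

lemma spectral:
  assumes "H \<in> carrier_mat n n" "mat_adjoint H = H" "char_poly H = (\<Prod>e\<leftarrow>es. [:-e, 1:])"
  shows "\<exists>U. U \<in> carrier_mat n n \<and> mat_adjoint U * U = 1\<^sub>m n \<and> mat_adjoint U * H * U = dg es"
  using assms
proof (induct es arbitrary: n H)
  case Nil
  have "n = 0" using degree_monic_char_poly[OF Nil(1)] Nil(3) by simp
  then show ?case using Nil(1)
    by (intro exI[of _ "1\<^sub>m 0"]) (auto simp: dg_def intro!: eq_matI)
next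
  case (Cons e es n H)
  note H = Cons(2) and herm = Cons(3) and cp = Cons(4)
  define m where "m = length es"
  have n: "n = Suc m"
    using degree_monic_char_poly[OF H] degree_linear_factors[of uminus "e # es"] cp
    unfolding m_def by simp
  have "eigenvalue H e" unfolding eigenvalue_root_char_poly[OF H] cp by simp
  from find_eigenvector[OF H this] have ev: "eigenvector H (find_eigenvector H e) e" .
  define v where "v = find_eigenvector H e"
  have v: "v \<in> carrier_vec n" and v0: "v \<noteq> 0\<^sub>v n" and Hv: "H *\<^sub>v v = e \<cdot>\<^sub>v v"
    using ev H unfolding v_def[symmetric] eigenvector_def by auto
  have nv: "vnorm2 v > 0"
  proof -
    have "v \<bullet>c v \<noteq> 0" using v v0 by simp
    then have "vnorm2 v \<noteq> 0" using cscalar_self[OF v] by auto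
    then show ?thesis using vnorm2_nonneg[of v] by simp
  qed
  define u where "u = (1 / complex_of_real (sqrt (vnorm2 v))) \<cdot>\<^sub>v v"
  have u: "u \<in> carrier_vec n" unfolding u_def using v by simp
  have nu: "vnorm2 u = 1" unfolding u_def vnorm2_smult using nv
    by (simp add: norm_divide power_divide)
  have Hu: "H *\<^sub>v u = e \<cdot>\<^sub>v u" unfolding u_def
    by (simp add: mult_mat_vec[OF H v] Hv smult_smult_assoc mult.commute)
  obtain W where W: "W \<in> carrier_mat n n" and WW: "mat_adjoint W * W = 1\<^sub>m n"
    and W0: "\<And>i. i < n \<Longrightarrow> W $$ (i,0) = u $ i"
    using unitary_ext[OF u nu] by blast
  have aW: "mat_adjoint W \<in> carrier_mat n n" using adj_carrier[OF W] .
  have WW': "W * mat_adjoint W = 1\<^sub>m n" using mat_mult_left_right_inverse[OF aW W WW] .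
  define H' where "H' = mat_adjoint W * H * W"
  have H': "H' \<in> carrier_mat n n" unfolding H'_def using aW H W by simp
  have hermH': "mat_adjoint H' = H'"
    unfolding H'_def using aW H W
    by (simp add: adj_mult[of _ n n _ n] herm)
  have col0: "H' $$ (i,0) = (if i = 0 then e else 0)" if i: "i < n" for i
  proof -
    have n0: "0 < n" using n by simp
    have HW: "(H * W) $$ (l,0) = e * W $$ (l,0)" if l: "l < n" for l
    proof -
      have "(H * W) $$ (l,0) = (\<Sum>k<n. H $$ (l,k) * W $$ (k,0))" by (rule mult_index_sum[OF H W l n0])
      also have "\<dots> = (\<Sum>k<n. H $$ (l,k) * u $ k)" using W0 by simp
      also have "\<dots> = (H *\<^sub>v u) $ l" using H u l by (simp add: scalar_prod_def lessThan_atLeast0)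
      also have "\<dots> = e * u $ l" using Hu l u by simp
      finally show ?thesis using W0[OF l] by simp
    qed
    have "H' $$ (i,0) = (mat_adjoint W * (H * W)) $$ (i,0)" unfolding H'_def using aW H W by simp
    also have "\<dots> = (\<Sum>l<n. mat_adjoint W $$ (i,l) * (H * W) $$ (l,0))"
      by (rule mult_index_sum[OF aW _ i n0]) (use H W in simp)
    also have "\<dots> = e * (\<Sum>l<n. mat_adjoint W $$ (i,l) * W $$ (l,0))"
      by (simp add: HW sum_distrib_left mult.left_commute)
    also have "(\<Sum>l<n. mat_adjoint W $$ (i,l) * W $$ (l,0)) = (mat_adjoint W * W) $$ (i,0)"
      by (rule mult_index_sum[OF aW W i n0, symmetric])
    also have "\<dots> = (if i = 0 then 1 else 0)" unfolding WW using i n0 by simp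
    finally show ?thesis by simp
  qed
  have row0: "H' $$ (0,j) = cnj (H' $$ (j,0))" if j: "j < n" for j
  proof -
    have "H' $$ (0,j) = mat_adjoint H' $$ (0,j)" using hermH' by simp
    also have "\<dots> = cnj (H' $$ (j,0))" using H' j n by simp
    finally show ?thesis .
  qed
  have ereal: "cnj e = e"
    using row0[of 0] col0[of 0] n by simp
  define M where "M = mat m m (\<lambda>(i,j). H' $$ (Suc i, Suc j))"
  have M: "M \<in> carrier_mat m m" unfolding M_def by simp
  have H'M: "H' = bext e M"
  proof (rule eq_matI)
    fix i j assume "i < dim_row (bext e M)" "j < dim_col (bext e M)"
    then have i: "i < Suc m" and j: "j < Suc m" using M by auto
    show "H' $$ (i,j) = bext e M $$ (i,j)"
    proof (cases i)
      case 0
      then show ?thesis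
      proof (cases j)
        case 0 then show ?thesis using \<open>i = 0\<close> col0 n by simp
      next
        case (Suc j') then show ?thesis using \<open>i = 0\<close> row0[of j] col0[of j] j n M by simp
      qed
    next
      case (Suc i')
      then show ?thesis
      proof (cases j)
        case 0 then show ?thesis using \<open>i = Suc i'\<close> col0[of i] i n M by simp
      next
        case (Suc j') then show ?thesis using \<open>i = Suc i'\<close> i j M by (simp add: M_def)
      qed
    qed
  qed (use H' M n in simp_all)
  have hermM: "mat_adjoint M = M"
  proof (rule eq_matI)
    fix i j assume "i < dim_row M" "j < dim_col M"
    then have i: "i < m" and j: "j < m" using M by auto
    have "mat_adjoint H' $$ (Suc i, Suc j) = H' $$ (Suc i, Suc j)" using hermH' by simp
    then show "mat_adjoint M $$ (i,j) = M $$ (i,j)" using i j H' n by (simp add: M_def)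
  qed (use M in simp_all)
  have "similar_mat H' H"
    unfolding similar_mat_def similar_mat_wit_def Let_def
    by (rule exI[of _ "mat_adjoint W"], rule exI[of _ W]) (use H' H W aW WW WW' in \<open>simp add: H'_def\<close>)
  then have "char_poly H' = char_poly H" by (rule char_poly_similar)
  then have "[:-e, 1:] * char_poly M = [:-e, 1:] * (\<Prod>e\<leftarrow>es. [:-e, 1:])"
    using char_poly_bext[OF M, of e] cp H'M by simp
  moreover have nz: "[:-e, 1:] \<noteq> (0 :: complex poly)" by simp
  ultimately have cpM: "char_poly M = (\<Prod>e\<leftarrow>es. [:-e, 1:])" using mult_left_cancel[OF nz] by blast
  obtain U3 where U3: "U3 \<in> carrier_mat m m" and UU3: "mat_adjoint U3 * U3 = 1\<^sub>m m"
    and D3: "mat_adjoint U3 * M * U3 = dg es"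
    using Cons(1)[OF M hermM cpM] by blast
  have aU3: "mat_adjoint U3 \<in> carrier_mat m m" using adj_carrier[OF U3] .
  define U where "U = W * bext 1 U3"
  have E: "bext 1 U3 \<in> carrier_mat n n" using bext_carrier[OF U3] n by simp
  have aE: "bext 1 (mat_adjoint U3) \<in> carrier_mat n n" using bext_carrier[OF aU3] n by simp
  have U: "U \<in> carrier_mat n n" unfolding U_def using W E by simp
  have aU: "mat_adjoint U = bext 1 (mat_adjoint U3) * mat_adjoint W"
    unfolding U_def by (simp add: adj_mult[OF W E] adj_bext[OF U3])
  have "mat_adjoint U * U = bext 1 (mat_adjoint U3) * ((mat_adjoint W * W) * bext 1 U3)"
    unfolding aU unfolding U_def using aE aW W E by (simp add: assoc_mult_mat[of _ n n _ n _ n])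
  also have "\<dots> = bext 1 (mat_adjoint U3 * U3)" unfolding WW using E n U3
    by (simp add: bext_mult[OF aU3 U3])
  also have "\<dots> = 1\<^sub>m n" unfolding UU3 bext_one n ..
  finally have UU: "mat_adjoint U * U = 1\<^sub>m n" .
  have "mat_adjoint U * H * U = bext 1 (mat_adjoint U3) * H' * bext 1 U3"
    unfolding aU unfolding U_def H'_def using aE aW W E H by (simp add: assoc_mult_mat[of _ n n _ n _ n])
  also have "\<dots> = bext (1 * e * 1) (mat_adjoint U3 * M * U3)"
    unfolding H'M by (simp add: bext_mult[OF aU3 M] bext_mult[OF mult_carrier_mat[OF aU3 M] U3] M aU3)
  also have "\<dots> = dg (e # es)" unfolding D3 dg_Cons by simp
  finally show ?case using U UU by blast
qed



lemma proots_linear_prod: "proots (\<Prod>a\<leftarrow>as. [:- a, 1:]) = mset (as :: complex list)"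
proof (induct as)
  case (Cons a as)
  have nz: "(\<Prod>a\<leftarrow>as. [:- a, 1:]) \<noteq> (0 :: complex poly)"
    by (auto simp: prod_list_zero_iff)
  have pz: "[:- a, 1:] \<noteq> (0 :: complex poly)" by simp
  have eq: "(\<Prod>a\<leftarrow>a # as. [:- a, 1:]) = [:- a, 1:] * (\<Prod>a\<leftarrow>as. [:- a, 1:])" by simp
  show ?case by (simp only: eq proots_mult[OF pz nz] proots_linear_factor Cons) simp
qed simp

lemma prod_list_perm:
  assumes "mset xs = mset ys"
  shows "(\<Prod>a\<leftarrow>xs. f a) = (\<Prod>a\<leftarrow>ys. (f a :: 'b :: comm_monoid_mult))"
proof -
  have "(\<Prod>a\<leftarrow>xs. f a) = prod_mset (mset (map f xs))" by (simp only: prod_mset_prod_list)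
  also have "\<dots> = prod_mset (mset (map f ys))" using assms by simp
  also have "\<dots> = (\<Prod>a\<leftarrow>ys. f a)" by (simp only: prod_mset_prod_list)
  finally show ?thesis .
qed

lemma cnj_mult_self: "cnj z * z = complex_of_real ((cmod z)\<^sup>2)"
  by (metis complex_norm_square of_real_power mult.commute)

lemma gram_diag:
  assumes A: "A \<in> carrier_mat n n" and U: "U \<in> carrier_mat n n" and i: "i < n"
  shows "(mat_adjoint U * (mat_adjoint A * A) * U) $$ (i,i) = complex_of_real (\<Sum>l<n. (cmod ((A * U) $$ (l,i)))\<^sup>2)"
proof -
  have AU: "A * U \<in> carrier_mat n n" using A U by simp
  have aA: "mat_adjoint A \<in> carrier_mat n n" and aU: "mat_adjoint U \<in> carrier_mat n n"
    using adj_carrier[OF A] adj_carrier[OF U] by auto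
  have eq: "mat_adjoint U * (mat_adjoint A * A) * U = mat_adjoint (A * U) * (A * U)"
    by (simp add: adj_mult[OF A U] assoc_mult_mat[OF aU mult_carrier_mat[OF aA A] U] assoc_mult_mat[OF aA A U] assoc_mult_mat[OF aU aA mult_carrier_mat[OF A U]])
  have "(mat_adjoint (A * U) * (A * U)) $$ (i,i) = (\<Sum>l<n. mat_adjoint (A * U) $$ (i,l) * (A * U) $$ (l,i))"
    by (rule mult_index_sum[OF adj_carrier[OF AU] AU i i])
  also have "\<dots> = (\<Sum>l<n. complex_of_real ((cmod ((A * U) $$ (l,i)))\<^sup>2))"
  proof (intro sum.cong refl)
    fix l assume l: "l \<in> {..<n}"
    have "mat_adjoint (A * U) $$ (i,l) = cnj ((A * U) $$ (l,i))"
      by (rule adj_index) (use l i A U in \<open>simp_all add: carrier_matD[OF A] carrier_matD[OF U]\<close>)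
    then show "mat_adjoint (A * U) $$ (i,l) * (A * U) $$ (l,i) = complex_of_real ((cmod ((A * U) $$ (l,i)))\<^sup>2)"
      by (simp only: cnj_mult_self)
  qed
  finally show ?thesis unfolding eq by simp
qed

definition is_svd :: "complex mat \<Rightarrow> nat \<Rightarrow> complex mat \<Rightarrow> real list \<Rightarrow> bool" where
  "is_svd A n U lam \<longleftrightarrow> U \<in> carrier_mat n n \<and> mat_adjoint U * U = 1\<^sub>m n \<and>
     mat_adjoint U * (mat_adjoint A * A) * U = dg (map complex_of_real lam) \<and>
     length lam = n \<and> (\<forall>i<n. lam ! i \<ge> 0) \<and> (\<forall>i j. i \<le> j \<longrightarrow> j < n \<longrightarrow> lam ! j \<le> lam ! i)"

lemma svd_exists:
  assumes A: "A \<in> carrier_mat n n"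
  shows "\<exists>U. is_svd A n U (eigenvalues_desc (mat_adjoint A * A))"
proof -
  define H where "H = mat_adjoint A * A"
  have H: "H \<in> carrier_mat n n" unfolding H_def using A adj_carrier[OF A] by simp
  have herm: "mat_adjoint H = H" unfolding H_def by (simp add: adj_mult[OF adj_carrier[OF A] A])
  obtain as where cp: "char_poly H = (\<Prod>a\<leftarrow>as. [:- a, 1:])" and las: "length as = n"
    using char_poly_factorized[OF H] by blast
  obtain U0 where U0: "U0 \<in> carrier_mat n n" and D0: "mat_adjoint U0 * H * U0 = dg as"
    using spectral[OF H herm cp] by blast
  have asr: "as ! i = complex_of_real (Re (as ! i)) \<and> Re (as ! i) \<ge> 0" if i: "i < n" for i
  proof -
    have "as ! i = dg as $$ (i,i)" using i las by (simp add: dg_def)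
    also have "\<dots> = complex_of_real (\<Sum>l<n. (cmod ((A * U0) $$ (l,i)))\<^sup>2)"
      unfolding D0[symmetric] H_def by (rule gram_diag[OF A U0 i])
    finally have "as ! i = complex_of_real (\<Sum>l<n. (cmod ((A * U0) $$ (l,i)))\<^sup>2)" .
    then show ?thesis by (simp add: sum_nonneg)
  qed
  define lam where "lam = eigenvalues_desc H"
  have lam_eq: "lam = rev (sort (map Re as))"
    unfolding lam_def eigenvalues_desc_def cp proots_linear_prod by (metis mset_map sorted_list_of_multiset_mset)
  have llam: "length lam = n" unfolding lam_eq using las by simp
  have mlam: "mset (map complex_of_real lam) = mset as"
  proof -
    have "map complex_of_real (map Re as) = as"
      by (rule nth_equalityI) (use asr las in auto)
    then have "mset (map complex_of_real (map Re as)) = mset as" by simp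
    moreover have "mset (map complex_of_real lam) = mset (map complex_of_real (map Re as))"
      unfolding lam_eq by (simp only: mset_map mset_rev mset_sort)
    ultimately show ?thesis by simp
  qed
  have cp2: "char_poly H = (\<Prod>a\<leftarrow>map complex_of_real lam. [:- a, 1:])"
    unfolding cp by (rule prod_list_perm[OF mlam[symmetric]])
  obtain U where U: "U \<in> carrier_mat n n" and UU: "mat_adjoint U * U = 1\<^sub>m n"
    and D: "mat_adjoint U * H * U = dg (map complex_of_real lam)"
    using spectral[OF H herm cp2] by blast
  have nonneg: "\<forall>i<n. lam ! i \<ge> 0"
  proof (intro allI impI)
    fix i assume i: "i < n"
    have "lam ! i \<in> set lam" using i llam by simp
    then have "lam ! i \<in> Re ` set as" unfolding lam_eq by simp
    then obtain j where "j < n" "lam ! i = Re (as ! j)" using las by (auto simp: in_set_conv_nth)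
    then show "lam ! i \<ge> 0" using asr by simp
  qed
  have sorted: "\<forall>i j. i \<le> j \<longrightarrow> j < n \<longrightarrow> lam ! j \<le> lam ! i"
  proof (intro allI impI)
    fix i j assume ij: "i \<le> j" "j < n"
    have s: "sorted (sort (map Re as))" by simp
    have ls: "length (sort (map Re as)) = n" using las by simp
    have "lam ! j = sort (map Re as) ! (n - 1 - j)" unfolding lam_eq using ij ls by (simp add: rev_nth)
    also have "\<dots> \<le> sort (map Re as) ! (n - 1 - i)"
      using s ij ls by (intro sorted_nth_mono) auto
    also have "\<dots> = lam ! i" unfolding lam_eq using ij ls by (simp add: rev_nth)
    finally show "lam ! j \<le> lam ! i" .
  qed
  show ?thesis unfolding is_svd_def H_def[symmetric] lam_def[symmetric]
    using U UU D llam nonneg sorted by blast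
qed



lemma dg_mult_index:
  assumes W: "W \<in> carrier_mat n k" and l: "length es = n" and i: "i < n" and j: "j < k"
  shows "(dg es * W) $$ (i,j) = es ! i * W $$ (i,j)"
proof -
  have "(dg es * W) $$ (i,j) = (\<Sum>l<n. dg es $$ (i,l) * W $$ (l,j))"
    by (rule mult_index_sum[OF _ W i j]) (use dg_carrier[of es] l in simp)
  also have "\<dots> = (\<Sum>l<n. (if l = i then es ! i * W $$ (i,j) else 0))"
    by (intro sum.cong refl) (use i l in \<open>auto simp: dg_def\<close>)
  also have "\<dots> = es ! i * W $$ (i,j)" using i by simp
  finally show ?thesis .
qed

lemma fro2_AM:
  assumes A: "A \<in> carrier_mat n n" and svd: "is_svd A n U lam" and M: "M \<in> carrier_mat n k"
  shows "fro2 (A * M) = (\<Sum>i<n. lam ! i * (\<Sum>j<k. (cmod ((mat_adjoint U * M) $$ (i,j)))\<^sup>2))"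
proof -
  from svd have U: "U \<in> carrier_mat n n" and UU: "mat_adjoint U * U = 1\<^sub>m n"
    and D: "mat_adjoint U * (mat_adjoint A * A) * U = dg (map complex_of_real lam)"
    and llam: "length lam = n"
    unfolding is_svd_def by auto
  define H where "H = mat_adjoint A * A"
  define Dm where "Dm = dg (map complex_of_real lam)"
  have aA: "mat_adjoint A \<in> carrier_mat n n" using adj_carrier[OF A] .
  have aU: "mat_adjoint U \<in> carrier_mat n n" using adj_carrier[OF U] .
  have aM: "mat_adjoint M \<in> carrier_mat k n" using adj_carrier[OF M] .
  have H: "H \<in> carrier_mat n n" unfolding H_def using aA A by simp
  have Dm: "Dm \<in> carrier_mat n n" unfolding Dm_def using dg_carrier[of "map complex_of_real lam"] llam by simp
  have UU': "U * mat_adjoint U = 1\<^sub>m n" using mat_mult_left_right_inverse[OF aU U UU] .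
  have HD: "H = U * Dm * mat_adjoint U"
  proof -
    have "U * Dm * mat_adjoint U = (U * mat_adjoint U) * H * (U * mat_adjoint U)"
      unfolding Dm_def D[folded H_def, symmetric] using U aU H
      by (simp add: assoc_mult_mat[of _ n n _ n _ n])
    also have "\<dots> = H" unfolding UU' using H by simp
    finally show ?thesis by simp
  qed
  define W where "W = mat_adjoint U * M"
  have W: "W \<in> carrier_mat n k" unfolding W_def using aU M by simp
  have aW: "mat_adjoint W = mat_adjoint M * U" unfolding W_def by (simp add: adj_mult[OF aU M])
  have AM: "A * M \<in> carrier_mat n k" using A M by simp
  have "mat_adjoint (A * M) * (A * M) = mat_adjoint M * H * M"
    unfolding H_def adj_mult[OF A M] using aM aA A M
    by (simp add: assoc_mult_mat[OF aM aA mult_carrier_mat[OF A M]] assoc_mult_mat[OF aA A M]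
        assoc_mult_mat[OF aM mult_carrier_mat[OF aA A] M])
  also have "\<dots> = mat_adjoint W * (Dm * W)"
    unfolding HD aW unfolding W_def using aM U Dm aU M
    by (simp add: assoc_mult_mat[of _ k n _ n _ n] assoc_mult_mat[of _ n n _ n _ n] assoc_mult_mat[of _ n n _ n _ k]
       assoc_mult_mat[of _ k n _ n _ k])
  finally have eq: "mat_adjoint (A * M) * (A * M) = mat_adjoint W * (Dm * W)" .
  have DW: "Dm * W \<in> carrier_mat n k" using Dm W by simp
  have diag: "(mat_adjoint W * (Dm * W)) $$ (j,j) = complex_of_real (\<Sum>i<n. lam ! i * (cmod (W $$ (i,j)))\<^sup>2)"
    if j: "j < k" for j
  proof -
    have "(mat_adjoint W * (Dm * W)) $$ (j,j) = (\<Sum>i<n. mat_adjoint W $$ (j,i) * (Dm * W) $$ (i,j))"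
      by (rule mult_index_sum[OF adj_carrier[OF W] DW j j])
    also have "\<dots> = (\<Sum>i<n. complex_of_real (lam ! i * (cmod (W $$ (i,j)))\<^sup>2))"
    proof (intro sum.cong refl)
      fix i assume i: "i \<in> {..<n}"
      have a: "mat_adjoint W $$ (j,i) = cnj (W $$ (i,j))"
        by (rule adj_index) (use i j W in \<open>simp_all add: carrier_matD[OF W]\<close>)
      have b: "(Dm * W) $$ (i,j) = complex_of_real (lam ! i) * W $$ (i,j)"
        unfolding Dm_def using dg_mult_index[OF W _ _ j, of "map complex_of_real lam"] i llam by simp
      show "mat_adjoint W $$ (j,i) * (Dm * W) $$ (i,j) = complex_of_real (lam ! i * (cmod (W $$ (i,j)))\<^sup>2)"
        unfolding a b using cnj_mult_self[of "W $$ (i,j)"] by (simp add: mult.left_commute)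
    qed
    also have "\<dots> = complex_of_real (\<Sum>i<n. lam ! i * (cmod (W $$ (i,j)))\<^sup>2)" by simp
    finally show ?thesis .
  qed
  have "fro2 (A * M) = Re (mat_trace (mat_adjoint W * (Dm * W)))"
    unfolding eq[symmetric] trace_adj_mult_self ..
  also have "\<dots> = (\<Sum>j<k. \<Sum>i<n. lam ! i * (cmod (W $$ (i,j)))\<^sup>2)"
    unfolding mat_trace_def using W DW diag by (simp add: Re_sum carrier_matD[OF W])
  also have "\<dots> = (\<Sum>i<n. lam ! i * (\<Sum>j<k. (cmod (W $$ (i,j)))\<^sup>2))"
    by (subst sum.swap) (simp add: sum_distrib_left)
  finally show ?thesis unfolding W_def .
qed



lemma count_ind: "(\<Sum>i<n. if i < k then (1::real) else 0) = real (min n k)"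
  by (induct n) auto

lemma mult_cnj_self: "z * cnj z = complex_of_real ((cmod z)\<^sup>2)"
  by (metis complex_norm_square of_real_power)

lemma comb_ineq:
  fixes lam w :: "nat \<Rightarrow> real"
  assumes mono: "\<And>i j. i \<le> j \<Longrightarrow> j < n \<Longrightarrow> lam j \<le> lam i"
    and w: "\<And>i. i < n \<Longrightarrow> 0 \<le> w i \<and> w i \<le> 1"
    and sw: "(\<Sum>i<n. w i) = real k"
  shows "(\<Sum>i<n. lam i * w i) \<le> (\<Sum>i<k. lam i)"
proof -
  have "real k \<le> real n"
  proof -
    have "(\<Sum>i<n. w i) \<le> (\<Sum>i<n. 1)" by (rule sum_mono) (use w in auto)
    then show ?thesis using sw by simp
  qed
  then have kn: "k \<le> n" by simp
  show ?thesis
  proof (cases k)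
    case 0
    then have "\<forall>i\<in>{..<n}. w i = 0" using sum_nonneg_eq_0_iff[of "{..<n}" w] sw w by auto
    then show ?thesis using 0 by simp
  next
    case (Suc k')
    define c where "c = lam k'"
    define ind where "ind i = (if i < k then 1 else (0::real))" for i
    have s1: "(\<Sum>i<k. lam i) = (\<Sum>i<n. lam i * ind i)"
    proof -
      have "(\<Sum>i<n. lam i * ind i) = (\<Sum>i<n. if i < k then lam i else 0)"
        unfolding ind_def by (intro sum.cong refl) simp
      also have "\<dots> = (\<Sum>i\<in>{..<n} \<inter> {i. i < k}. lam i)"
        by (simp add: sum.inter_restrict)
      also have "{..<n} \<inter> {i. i < k} = {..<k}" using kn by auto
      finally show ?thesis by simp
    qed
    have s2: "(\<Sum>i<n. ind i) = real k"
      unfolding ind_def count_ind using kn by simp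
    have "(\<Sum>i<n. lam i * w i) - (\<Sum>i<k. lam i) = (\<Sum>i<n. lam i * (w i - ind i))"
      unfolding s1 by (simp add: sum_subtractf right_diff_distrib)
    also have "\<dots> \<le> (\<Sum>i<n. c * (w i - ind i))"
    proof (rule sum_mono)
      fix i assume i: "i \<in> {..<n}"
      show "lam i * (w i - ind i) \<le> c * (w i - ind i)"
      proof (cases "i < k")
        case True
        then have "c \<le> lam i" unfolding c_def using mono[of i k'] Suc i kn by auto
        moreover have "w i - ind i \<le> 0" using True w i unfolding ind_def by auto
        ultimately show ?thesis by (simp add: mult_right_mono_neg)
      next
        case False
        then have "lam i \<le> c" unfolding c_def using mono[of k' i] Suc i by auto
        moreover have "w i - ind i \<ge> 0" using False w i unfolding ind_def by auto
        ultimately show ?thesis by (simp add: mult_right_mono)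
      qed
    qed
    also have "\<dots> = c * ((\<Sum>i<n. w i) - (\<Sum>i<n. ind i))" by (simp add: sum_distrib_left sum_subtractf right_diff_distrib)
    also have "\<dots> = 0" using sw s2 by simp
    finally show ?thesis by simp
  qed
qed

lemma KF_upper:
  assumes A: "A \<in> carrier_mat n n" and svd: "is_svd A n U lam"
    and V: "V \<in> carrier_mat n k" and VV: "mat_adjoint V * V = 1\<^sub>m k"
  shows "fro2 (A * V) \<le> (\<Sum>i<k. lam ! i)"
proof -
  from svd have U: "U \<in> carrier_mat n n" and UU: "mat_adjoint U * U = 1\<^sub>m n"
    and llam: "length lam = n" and nonneg: "\<forall>i<n. lam ! i \<ge> 0"
    and mono: "\<forall>i j. i \<le> j \<longrightarrow> j < n \<longrightarrow> lam ! j \<le> lam ! i"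
    unfolding is_svd_def by auto
  have aU: "mat_adjoint U \<in> carrier_mat n n" using adj_carrier[OF U] .
  have aV: "mat_adjoint V \<in> carrier_mat k n" using adj_carrier[OF V] .
  have UU': "U * mat_adjoint U = 1\<^sub>m n" using mat_mult_left_right_inverse[OF aU U UU] .
  define W where "W = mat_adjoint U * V"
  have W: "W \<in> carrier_mat n k" unfolding W_def using aU V by simp
  have aW: "mat_adjoint W \<in> carrier_mat k n" using adj_carrier[OF W] .
  have WW: "mat_adjoint W * W = 1\<^sub>m k"
  proof -
    have "mat_adjoint W * W = mat_adjoint V * (U * mat_adjoint U) * V"
      unfolding W_def adj_mult[OF aU V] adj_adj using aV U aU V
      by (simp add: assoc_mult_mat[of _ k n _ n _ k] assoc_mult_mat[of _ k n _ n _ n] assoc_mult_mat[of _ n n _ n _ k])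
    also have "\<dots> = 1\<^sub>m k" unfolding UU' using VV by (simp add: right_mult_one_mat[OF aV])
    finally show ?thesis .
  qed
  define w where "w i = (\<Sum>j<k. (cmod (W $$ (i,j)))\<^sup>2)" for i
  have fro: "fro2 (A * V) = (\<Sum>i<n. lam ! i * w i)"
    unfolding fro2_AM[OF A svd V] w_def W_def ..
  have sw: "(\<Sum>i<n. w i) = real k"
  proof -
    have "(\<Sum>i<n. w i) = fro2 W" unfolding w_def fro2_def using W by simp
    also have "\<dots> = Re (mat_trace (mat_adjoint W * W))" by (simp add: trace_adj_mult_self)
    also have "\<dots> = real k" unfolding WW mat_trace_def by simp
    finally show ?thesis .
  qed
  have wb: "0 \<le> w i \<and> w i \<le> 1" if i: "i < n" for i
  proof -
    have w0: "0 \<le> w i" unfolding w_def by (simp add: sum_nonneg)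
    define P where "P = W * mat_adjoint W"
    have P: "P \<in> carrier_mat n n" unfolding P_def using W aW by simp
    have PP: "P * P = P"
    proof -
      have "P * P = W * (mat_adjoint W * W) * mat_adjoint W"
        unfolding P_def using W aW
        by (simp add: assoc_mult_mat[of _ n k _ n _ k] assoc_mult_mat[of _ n k _ k _ n] assoc_mult_mat[of _ n k _ n _ n]
          assoc_mult_mat[of _ k n _ k _ n])
      also have "\<dots> = P" unfolding WW P_def using W by simp
      finally show ?thesis .
    qed
    have Pil: "P $$ (i,l) = (\<Sum>j<k. W $$ (i,j) * cnj (W $$ (l,j)))" if l: "l < n" for l
    proof -
      have "P $$ (i,l) = (\<Sum>j<k. W $$ (i,j) * mat_adjoint W $$ (j,l))"
        unfolding P_def by (rule mult_index_sum[OF W aW i l])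
      also have "\<dots> = (\<Sum>j<k. W $$ (i,j) * cnj (W $$ (l,j)))"
        by (intro sum.cong refl) (use l W in \<open>simp add: carrier_matD[OF W]\<close>)
      finally show ?thesis .
    qed
    have Pli: "P $$ (l,i) = cnj (P $$ (i,l))" if l: "l < n" for l
    proof -
      have "P $$ (l,i) = (\<Sum>j<k. W $$ (l,j) * mat_adjoint W $$ (j,i))"
        unfolding P_def by (rule mult_index_sum[OF W aW l i])
      also have "\<dots> = (\<Sum>j<k. W $$ (l,j) * cnj (W $$ (i,j)))"
        by (intro sum.cong refl) (use i W in \<open>simp add: carrier_matD[OF W]\<close>)
      also have "\<dots> = cnj (P $$ (i,l))" unfolding Pil[OF l] by (simp add: mult.commute)
      finally show ?thesis .
    qed
    have Pii: "P $$ (i,i) = complex_of_real (w i)"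
    proof -
      have "P $$ (i,i) = (\<Sum>j<k. complex_of_real ((cmod (W $$ (i,j)))\<^sup>2))"
        unfolding Pil[OF i] by (intro sum.cong refl) (rule mult_cnj_self)
      also have "\<dots> = complex_of_real (w i)" unfolding w_def by (simp only: of_real_sum)
      finally show ?thesis .
    qed
    have "(w i)\<^sup>2 = (cmod (P $$ (i,i)))\<^sup>2" unfolding Pii using w0 by simp
    also have "\<dots> \<le> (\<Sum>l<n. (cmod (P $$ (i,l)))\<^sup>2)"
      by (rule member_le_sum[of i "{..<n}" "\<lambda>l. (cmod (P $$ (i,l)))\<^sup>2"]) (use i in auto)
    also have "\<dots> = Re ((P * P) $$ (i,i))"
    proof -
      have "(P * P) $$ (i,i) = (\<Sum>l<n. P $$ (i,l) * P $$ (l,i))" by (rule mult_index_sum[OF P P i i])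
      also have "\<dots> = (\<Sum>l<n. complex_of_real ((cmod (P $$ (i,l)))\<^sup>2))"
      proof (intro sum.cong refl)
        fix l assume "l \<in> {..<n}"
        then have "P $$ (l,i) = cnj (P $$ (i,l))" using Pli by simp
        then show "P $$ (i,l) * P $$ (l,i) = complex_of_real ((cmod (P $$ (i,l)))\<^sup>2)"
          by (simp only: mult_cnj_self)
      qed
      finally show ?thesis by simp
    qed
    also have "\<dots> = w i" unfolding PP Pii by simp
    finally have "(w i)\<^sup>2 \<le> w i" .
    then have sq: "w i * w i \<le> w i" by (simp add: power2_eq_square)
    have "w i \<le> 1"
    proof (rule ccontr)
      assume "\<not> w i \<le> 1"
      then have g: "w i > 1" by simp
      then have "w i * 1 < w i * w i" by (intro mult_strict_left_mono) auto
      with sq show False by simp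
    qed
    with w0 show ?thesis by simp
  qed
  have "(\<Sum>i<n. lam ! i * w i) \<le> (\<Sum>i<k. lam ! i)"
    by (rule comb_ineq[of n "\<lambda>i. lam ! i" w k]) (use mono wb sw in auto)
  then show ?thesis unfolding fro .
qed



lemma KF_attain:
  assumes A: "A \<in> carrier_mat n n" and svd: "is_svd A n U lam" and kn: "k \<le> n"
  shows "\<exists>V. V \<in> carrier_mat n k \<and> mat_adjoint V * V = 1\<^sub>m k \<and> fro2 (A * V) = (\<Sum>i<k. lam ! i)"
proof -
  from svd have U: "U \<in> carrier_mat n n" and UU: "mat_adjoint U * U = 1\<^sub>m n"
    unfolding is_svd_def by auto
  have aU: "mat_adjoint U \<in> carrier_mat n n" using adj_carrier[OF U] .
  define V where "V = mat n k (\<lambda>(i,j). U $$ (i,j))"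
  have V: "V \<in> carrier_mat n k" unfolding V_def by simp
  have aV: "mat_adjoint V \<in> carrier_mat k n" using adj_carrier[OF V] .
  have key: "(\<Sum>l<n. cnj (U $$ (l,i)) * V $$ (l,j)) = (if i = j then 1 else 0)" if i: "i < n" and j: "j < k" for i j
  proof -
    have "(\<Sum>l<n. cnj (U $$ (l,i)) * V $$ (l,j)) = (\<Sum>l<n. mat_adjoint U $$ (i,l) * U $$ (l,j))"
      by (intro sum.cong refl) (use i j kn U in \<open>simp add: V_def carrier_matD[OF U]\<close>)
    also have "\<dots> = (mat_adjoint U * U) $$ (i,j)" using j kn by (intro mult_index_sum[symmetric, OF aU U i]) simp
    also have "\<dots> = (if i = j then 1 else 0)" unfolding UU using i j kn by simp
    finally show ?thesis .
  qed
  have W: "(mat_adjoint U * V) $$ (i,j) = (if i = j then 1 else 0)" if i: "i < n" and j: "j < k" for i j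
  proof -
    have "(mat_adjoint U * V) $$ (i,j) = (\<Sum>l<n. mat_adjoint U $$ (i,l) * V $$ (l,j))"
      by (rule mult_index_sum[OF aU V i j])
    also have "\<dots> = (\<Sum>l<n. cnj (U $$ (l,i)) * V $$ (l,j))"
      by (intro sum.cong refl) (use i U in \<open>simp add: carrier_matD[OF U]\<close>)
    finally show ?thesis using key[OF i j] by simp
  qed
  have VV: "mat_adjoint V * V = 1\<^sub>m k"
  proof (rule eq_matI)
    fix i j assume "i < dim_row (1\<^sub>m k :: complex mat)" "j < dim_col (1\<^sub>m k :: complex mat)"
    then have i: "i < k" and j: "j < k" by auto
    have "(mat_adjoint V * V) $$ (i,j) = (\<Sum>l<n. mat_adjoint V $$ (i,l) * V $$ (l,j))"
      by (rule mult_index_sum[OF aV V i j])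
    also have "\<dots> = (\<Sum>l<n. cnj (U $$ (l,i)) * V $$ (l,j))"
      by (intro sum.cong refl) (use i kn in \<open>simp add: V_def\<close>)
    also have "\<dots> = 1\<^sub>m k $$ (i,j)" using key[of i j] i j kn by simp
    finally show "(mat_adjoint V * V) $$ (i,j) = 1\<^sub>m k $$ (i,j)" .
  qed (use aV V in simp_all)
  have "fro2 (A * V) = (\<Sum>i<n. lam ! i * (\<Sum>j<k. (cmod ((mat_adjoint U * V) $$ (i,j)))\<^sup>2))"
    by (rule fro2_AM[OF A svd V])
  also have "\<dots> = (\<Sum>i<n. lam ! i * (if i < k then 1 else 0))"
  proof (intro sum.cong refl)
    fix i assume i: "i \<in> {..<n}"
    have "(\<Sum>j<k. (cmod ((mat_adjoint U * V) $$ (i,j)))\<^sup>2) = (\<Sum>j<k. if j = i then 1 else 0)"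
      by (intro sum.cong refl) (use i W in auto)
    also have "\<dots> = (if i < k then 1 else 0)" by simp
    finally show "lam ! i * (\<Sum>j<k. (cmod ((mat_adjoint U * V) $$ (i,j)))\<^sup>2) = lam ! i * (if i < k then 1 else 0)"
      by simp
  qed
  also have "\<dots> = (\<Sum>i<n. if i < k then lam ! i else 0)" by (intro sum.cong refl) simp
  also have "\<dots> = (\<Sum>i\<in>{..<n} \<inter> {i. i < k}. lam ! i)" by (simp add: sum.inter_restrict)
  also have "{..<n} \<inter> {i. i < k} = {..<k}" using kn by auto
  finally show ?thesis using V VV by blast
qed

lemma fro_total:
  assumes A: "A \<in> carrier_mat n n" and svd: "is_svd A n U lam"
  shows "fro2 A = (\<Sum>i<n. lam ! i)"
proof -
  from svd have U: "U \<in> carrier_mat n n" and UU: "mat_adjoint U * U = 1\<^sub>m n"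
    unfolding is_svd_def by auto
  have aU: "mat_adjoint U \<in> carrier_mat n n" using adj_carrier[OF U] .
  have I: "1\<^sub>m n \<in> carrier_mat n n" by simp
  have "fro2 A = fro2 (A * 1\<^sub>m n)" using A by simp
  also have "\<dots> = (\<Sum>i<n. lam ! i * (\<Sum>j<n. (cmod ((mat_adjoint U * 1\<^sub>m n) $$ (i,j)))\<^sup>2))"
    by (rule fro2_AM[OF A svd I])
  also have "\<dots> = (\<Sum>i<n. lam ! i)"
  proof (intro sum.cong refl)
    fix i assume i: "i \<in> {..<n}"
    have "complex_of_real (\<Sum>j<n. (cmod ((mat_adjoint U * 1\<^sub>m n) $$ (i,j)))\<^sup>2)
        = (\<Sum>j<n. complex_of_real ((cmod (U $$ (j,i)))\<^sup>2))"
      unfolding of_real_sum using i aU U by (intro sum.cong refl) (simp add: carrier_matD[OF U] right_mult_one_mat[OF aU])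
    also have "\<dots> = (\<Sum>j<n. mat_adjoint U $$ (i,j) * U $$ (j,i))"
      using i U by (intro sum.cong refl) (simp add: carrier_matD[OF U] cnj_mult_self)
    also have "\<dots> = (mat_adjoint U * U) $$ (i,i)" using i by (intro mult_index_sum[symmetric, OF aU U]) auto
    also have "\<dots> = 1" unfolding UU using i by simp
    finally have "(\<Sum>j<n. (cmod ((mat_adjoint U * 1\<^sub>m n) $$ (i,j)))\<^sup>2) = 1"
      by (metis of_real_eq_1_iff)
    then show "lam ! i * (\<Sum>j<n. (cmod ((mat_adjoint U * 1\<^sub>m n) $$ (i,j)))\<^sup>2) = lam ! i" by simp
  qed
  finally show ?thesis .
qed



lemma entries_holo:
  assumes an: "\<And>i j. i < n \<Longrightarrow> j < n \<Longrightarrow> (\<lambda>z. F z $$ (i, j)) analytic_on \<Omega>"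
    and i: "i < n" and V: "V \<in> carrier_mat n k" and j: "j < k"
  shows "(\<lambda>z. \<Sum>l<n. F z $$ (i,l) * V $$ (l,j)) holomorphic_on \<Omega>"
proof -
  have "(\<lambda>z. F z $$ (i,l)) holomorphic_on \<Omega>" if "l < n" for l
    using an[OF i that] by (rule analytic_imp_holomorphic)
  then show ?thesis by (intro holomorphic_on_sum holomorphic_on_mult holomorphic_on_const) auto
qed

lemma fro2_sum_prod:
  assumes "M \<in> carrier_mat n k"
  shows "fro2 M = (\<Sum>p\<in>{..<n} \<times> {..<k}. (cmod (M $$ (fst p, snd p)))\<^sup>2)"
  using assms unfolding fro2_def by (simp add: sum.cartesian_product carrier_matD case_prod_beta)

theorem corollary6:
  fixes \<Omega> :: "complex set" and F :: "complex \<Rightarrow> complex mat" and n :: nat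
  assumes region: "open \<Omega>" "connected \<Omega>" "\<Omega> \<noteq> {}"
    and dim: "\<And>z. z \<in> \<Omega> \<Longrightarrow> F z \<in> carrier_mat n n"
    and analytic: "\<And>i j. i < n \<Longrightarrow> j < n \<Longrightarrow> (\<lambda>z. F z $$ (i, j)) analytic_on \<Omega>"
  shows "((\<forall>z\<in>\<Omega>. \<forall>w\<in>\<Omega>. F z = F w)
            \<longleftrightarrow> (\<forall>k\<in>{1..n}. \<forall>z\<in>\<Omega>. \<forall>w\<in>\<Omega>. singular_value (F z) k = singular_value (F w) k))
       \<and> ((\<forall>z\<in>\<Omega>. \<forall>w\<in>\<Omega>. F z = F w)
            \<longleftrightarrow> (\<forall>k\<in>{1..n}. \<exists>zk\<in>\<Omega>. \<forall>z\<in>\<Omega>. singular_value (F z) k \<le> singular_value (F zk) k))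
       \<and> ((\<forall>z\<in>\<Omega>. \<forall>w\<in>\<Omega>. F z = F w)
            \<longleftrightarrow> (\<forall>z\<in>\<Omega>. \<forall>w\<in>\<Omega>. frobenius_norm (F z) = frobenius_norm (F w)))
       \<and> ((\<forall>z\<in>\<Omega>. \<forall>w\<in>\<Omega>. F z = F w)
            \<longleftrightarrow> (\<exists>z0\<in>\<Omega>. \<forall>z\<in>\<Omega>. frobenius_norm (F z) \<le> frobenius_norm (F z0)))"
proof -
  define C where "C \<longleftrightarrow> (\<forall>z\<in>\<Omega>. \<forall>w\<in>\<Omega>. F z = F w)"
  define lamz where "lamz z = eigenvalues_desc (mat_adjoint (F z) * F z)" for z
  obtain p where p: "p \<in> \<Omega>" using region(3) by blast
  have svd: "\<exists>U. is_svd (F z) n U (lamz z)" if "z \<in> \<Omega>" for z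
    unfolding lamz_def by (rule svd_exists[OF dim[OF that]])
  have nonneg: "lamz z ! i \<ge> 0" if "z \<in> \<Omega>" "i < n" for z i
    using svd[OF that(1)] that(2) unfolding is_svd_def by auto
  have sv: "singular_value (F z) k = sqrt (lamz z ! (k - 1))" for z k
    unfolding singular_value_def lamz_def ..
  have holo: "(\<lambda>z. \<Sum>l<n. F z $$ (i,l) * V $$ (l,j)) holomorphic_on \<Omega>"
    if "i < n" "V \<in> carrier_mat n k" "j < k" for i j V k
    by (rule entries_holo[OF analytic that])
  have frob_max: "C" if "\<exists>z0\<in>\<Omega>. \<forall>z\<in>\<Omega>. frobenius_norm (F z) \<le> frobenius_norm (F z0)"
  proof -
    from that obtain z0 where z0: "z0 \<in> \<Omega>" and le: "\<And>z. z \<in> \<Omega> \<Longrightarrow> frobenius_norm (F z) \<le> frobenius_norm (F z0)"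
      by blast
    have I: "1\<^sub>m n \<in> carrier_mat n n" by simp
    define g where "g = (\<lambda>q z. \<Sum>l<n. F z $$ (fst q,l) * 1\<^sub>m n $$ (l,snd q))"
    have gF: "g q z = F z $$ (fst q, snd q)" if zq: "z \<in> \<Omega>" "q \<in> {..<n} \<times> {..<n}" for q z
    proof -
      have e: "F z * 1\<^sub>m n = F z" using dim[OF zq(1)] by simp
      obtain i j where q: "q = (i,j)" and i: "i < n" and j: "j < n" using zq(2) by blast
      have "g q z = (F z * 1\<^sub>m n) $$ (i,j)" unfolding g_def q fst_conv snd_conv
        by (rule mult_index_sum[OF dim[OF zq(1)] I i j, symmetric])
      then show ?thesis unfolding e q by simp
    qed
    have fg: "fro2 (F z) = (\<Sum>q\<in>{..<n} \<times> {..<n}. (cmod (g q z))\<^sup>2)" if "z \<in> \<Omega>" for z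
      unfolding fro2_sum_prod[OF dim[OF that]] using gF[OF that] by (intro sum.cong refl) simp
    have eq: "g q z = g q z0" if "z \<in> \<Omega>" "q \<in> {..<n} \<times> {..<n}" for z q
    proof (rule sumsq_max_const[OF _ region(1,2) z0 _ _ that(1) that(2)])
      show "g q holomorphic_on \<Omega>" if "q \<in> {..<n} \<times> {..<n}" for q
        unfolding g_def using that by (intro holo[OF _ I]) auto
      show "(\<Sum>i\<in>{..<n} \<times> {..<n}. (cmod (g i z))\<^sup>2) \<le> (\<Sum>i\<in>{..<n} \<times> {..<n}. (cmod (g i z0))\<^sup>2)"
        if "z \<in> \<Omega>" for z
        using le[OF that] unfolding fg[OF that, symmetric] fg[OF z0, symmetric] frob_fro2 by simp
    qed simp
    have "F z = F z0" if "z \<in> \<Omega>" for z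
    proof (rule eq_matI)
      fix i j assume "i < dim_row (F z0)" "j < dim_col (F z0)"
      then have ij: "(i,j) \<in> {..<n} \<times> {..<n}" using dim[OF z0] by auto
      show "F z $$ (i,j) = F z0 $$ (i,j)"
        using eq[OF that ij] gF[OF that ij] gF[OF z0 ij] by simp
    qed (use dim[OF that] dim[OF z0] in simp_all)
    then show ?thesis unfolding C_def by simp
  qed
  have lam_const: "C" if lc: "\<forall>i<n. \<forall>z\<in>\<Omega>. \<forall>w\<in>\<Omega>. lamz z ! i = lamz w ! i"
  proof -
    have "fro2 (F z) = fro2 (F p)" if zin: "z \<in> \<Omega>" for z
    proof -
      obtain U where U: "is_svd (F z) n U (lamz z)" using svd[OF zin] by blast
      obtain U' where U': "is_svd (F p) n U' (lamz p)" using svd[OF p] by blast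
      have e: "\<And>i. i < n \<Longrightarrow> lamz z ! i = lamz p ! i" using lc zin p by blast
      have "(\<Sum>i<n. lamz z ! i) = (\<Sum>i<n. lamz p ! i)" using e by (intro sum.cong refl) simp
      then show ?thesis using fro_total[OF dim[OF zin] U] fro_total[OF dim[OF p] U'] by simp
    qed
    then show ?thesis by (intro frob_max bexI[OF _ p]) (simp add: frob_fro2)
  qed
  define S where "S k z = (\<Sum>i<k. lamz z ! i)" for k z
  have kf_max: "S k z = S k z0" if kn: "k \<le> n" and z0: "z0 \<in> \<Omega>" and le: "\<forall>z\<in>\<Omega>. S k z \<le> S k z0"
    and z: "z \<in> \<Omega>" for k z0 z
  proof -
    obtain U0 where U0: "is_svd (F z0) n U0 (lamz z0)" using svd[OF z0] by blast
    obtain V where V: "V \<in> carrier_mat n k" and VV: "mat_adjoint V * V = 1\<^sub>m k"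
      and f0: "fro2 (F z0 * V) = S k z0"
      using KF_attain[OF dim[OF z0] U0 kn] unfolding S_def by blast
    define g where "g = (\<lambda>q z. \<Sum>l<n. F z $$ (fst q,l) * V $$ (l,snd q))"
    have gF: "g q z = (F z * V) $$ (fst q, snd q)" if zq: "z \<in> \<Omega>" "q \<in> {..<n} \<times> {..<k}" for q z
    proof -
      obtain i j where q: "q = (i,j)" and i: "i < n" and j: "j < k" using zq(2) by blast
      show ?thesis unfolding g_def q fst_conv snd_conv
        by (rule mult_index_sum[OF dim[OF zq(1)] V i j, symmetric])
    qed
    have FV: "F z * V \<in> carrier_mat n k" if "z \<in> \<Omega>" for z using dim[OF that] V by simp
    have fg: "fro2 (F z * V) = (\<Sum>q\<in>{..<n} \<times> {..<k}. (cmod (g q z))\<^sup>2)" if "z \<in> \<Omega>" for z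
      unfolding fro2_sum_prod[OF FV[OF that]] using gF[OF that] by (intro sum.cong refl) simp
    have upper: "fro2 (F z * V) \<le> S k z" if zin: "z \<in> \<Omega>" for z
    proof -
      obtain U where U: "is_svd (F z) n U (lamz z)" using svd[OF zin] by blast
      show ?thesis unfolding S_def by (rule KF_upper[OF dim[OF zin] U V VV])
    qed
    have eq: "g q z = g q z0" if "z \<in> \<Omega>" "q \<in> {..<n} \<times> {..<k}" for z q
    proof (rule sumsq_max_const[OF _ region(1,2) z0 _ _ that(1) that(2)])
      show "g q holomorphic_on \<Omega>" if "q \<in> {..<n} \<times> {..<k}" for q
        unfolding g_def using that by (intro holo[OF _ V]) auto
      show "(\<Sum>i\<in>{..<n} \<times> {..<k}. (cmod (g i z))\<^sup>2) \<le> (\<Sum>i\<in>{..<n} \<times> {..<k}. (cmod (g i z0))\<^sup>2)"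
        if "z \<in> \<Omega>" for z
        unfolding fg[OF that, symmetric] fg[OF z0, symmetric] f0
        using upper[OF that] le that by fastforce
    qed simp
    have "fro2 (F z * V) = fro2 (F z0 * V)"
      unfolding fg[OF z] fg[OF z0] using eq[OF z] by (intro sum.cong refl) simp
    then have "S k z0 \<le> S k z" using upper[OF z] f0 by simp
    then show ?thesis using le z by (meson order_antisym)
  qed
  have sv_eq: "C" if "\<forall>k\<in>{1..n}. \<forall>z\<in>\<Omega>. \<forall>w\<in>\<Omega>. singular_value (F z) k = singular_value (F w) k"
  proof (rule lam_const, intro allI impI ballI)
    fix i z w assume i: "i < n" and z: "z \<in> \<Omega>" and w: "w \<in> \<Omega>"
    have si: "Suc i \<in> {1..n}" using i by simp
    have "singular_value (F z) (Suc i) = singular_value (F w) (Suc i)" using bspec[OF that si] z w by blast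
    then have "sqrt (lamz z ! i) = sqrt (lamz w ! i)" unfolding sv by simp
    then show "lamz z ! i = lamz w ! i" using nonneg[OF z i] nonneg[OF w i] by simp
  qed
  have sv_max: "C" if mx: "\<forall>k\<in>{1..n}. \<exists>zk\<in>\<Omega>. \<forall>z\<in>\<Omega>. singular_value (F z) k \<le> singular_value (F zk) k"
  proof (rule lam_const)
    have "\<forall>i<k. \<forall>z\<in>\<Omega>. \<forall>w\<in>\<Omega>. lamz z ! i = lamz w ! i" if "k \<le> n" for k
      using that
    proof (induct k)
      case 0 then show ?case by simp
    next
      case (Suc k)
      have kn: "k < n" using Suc.prems by simp
      have IH: "\<forall>i<k. \<forall>z\<in>\<Omega>. \<forall>w\<in>\<Omega>. lamz z ! i = lamz w ! i" using Suc.hyps[OF less_imp_le[OF kn]] .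
      obtain zk where zk: "zk \<in> \<Omega>" and mzk: "\<forall>z\<in>\<Omega>. singular_value (F z) (Suc k) \<le> singular_value (F zk) (Suc k)"
      proof -
        have "Suc k \<in> {1..n}" using kn by simp
        from bspec[OF mx this] show ?thesis using that by blast
      qed
      have lek: "lamz z ! k \<le> lamz zk ! k" if zin: "z \<in> \<Omega>" for z
      proof -
        have "sqrt (lamz z ! k) \<le> sqrt (lamz zk ! k)" using mzk zin unfolding sv by simp
        then show ?thesis by simp
      qed
      have Sz: "S (Suc k) z = S k zk + lamz z ! k" if "z \<in> \<Omega>" for z
      proof -
        have "S k z = S k zk" unfolding S_def
        proof (intro sum.cong refl)
          fix i assume "i \<in> {..<k}"
          then show "lamz z ! i = lamz zk ! i" using IH that zk by blast
        qed
        then show ?thesis unfolding S_def by simp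
      qed
      have allle: "\<forall>z\<in>\<Omega>. S (Suc k) z \<le> S (Suc k) zk" using Sz lek zk by simp
      have eqk: "lamz z ! k = lamz zk ! k" if zin: "z \<in> \<Omega>" for z
      proof -
        have "S (Suc k) z = S (Suc k) zk" using kf_max[OF _ zk allle zin] kn by simp
        then show ?thesis using Sz[OF zin] Sz[OF zk] by simp
      qed
      have "lamz z ! k = lamz w ! k" if "z \<in> \<Omega>" "w \<in> \<Omega>" for z w
        using eqk[OF that(1)] eqk[OF that(2)] by simp
      note new = this
      show ?case
      proof (intro allI impI ballI)
        fix i z w assume i: "i < Suc k" and z: "z \<in> \<Omega>" and w: "w \<in> \<Omega>"
        show "lamz z ! i = lamz w ! i"
        proof (cases "i = k")
          case True then show ?thesis using new[OF z w] by simp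
        next
          case False then have "i < k" using i by simp
          then show ?thesis using IH z w by blast
        qed
      qed
    qed
    note allk = this
    show "\<forall>i<n. \<forall>z\<in>\<Omega>. \<forall>w\<in>\<Omega>. lamz z ! i = lamz w ! i" using allk[OF order_refl] .
  qed
  have Ceq: "F z = F w" if "C" "z \<in> \<Omega>" "w \<in> \<Omega>" for z w
    using that unfolding C_def by blast
  have c1: "\<forall>k\<in>{1..n}. \<forall>z\<in>\<Omega>. \<forall>w\<in>\<Omega>. singular_value (F z) k = singular_value (F w) k" if "C"
  proof (intro ballI)
    fix k z w assume "z \<in> \<Omega>" "w \<in> \<Omega>"
    then have "F z = F w" using Ceq[OF that] by blast
    then show "singular_value (F z) k = singular_value (F w) k" by simp
  qed
  have c2: "\<forall>k\<in>{1..n}. \<exists>zk\<in>\<Omega>. \<forall>z\<in>\<Omega>. singular_value (F z) k \<le> singular_value (F zk) k" if "C"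
  proof (intro ballI bexI[of _ p])
    fix k z assume "z \<in> \<Omega>"
    then have "F z = F p" using Ceq[OF that] p by blast
    then show "singular_value (F z) k \<le> singular_value (F p) k" by simp
  qed (rule p)
  have c3: "\<forall>z\<in>\<Omega>. \<forall>w\<in>\<Omega>. frobenius_norm (F z) = frobenius_norm (F w)" if "C"
  proof (intro ballI)
    fix z w assume "z \<in> \<Omega>" "w \<in> \<Omega>"
    then have "F z = F w" using Ceq[OF that] by blast
    then show "frobenius_norm (F z) = frobenius_norm (F w)" by simp
  qed
  have c4: "\<exists>z0\<in>\<Omega>. \<forall>z\<in>\<Omega>. frobenius_norm (F z) \<le> frobenius_norm (F z0)" if "C"
  proof (intro ballI bexI[of _ p])
    fix z assume "z \<in> \<Omega>"
    then have "F z = F p" using Ceq[OF that] p by blast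
    then show "frobenius_norm (F z) \<le> frobenius_norm (F p)" by simp
  qed (rule p)
  have d3: "C" if fe: "\<forall>z\<in>\<Omega>. \<forall>w\<in>\<Omega>. frobenius_norm (F z) = frobenius_norm (F w)"
  proof (rule frob_max, intro bexI[of _ p] ballI)
    fix z assume "z \<in> \<Omega>"
    then have "frobenius_norm (F z) = frobenius_norm (F p)" using fe p by blast
    then show "frobenius_norm (F z) \<le> frobenius_norm (F p)" by simp
  qed (rule p)
  have i1: "C \<longleftrightarrow> (\<forall>k\<in>{1..n}. \<forall>z\<in>\<Omega>. \<forall>w\<in>\<Omega>. singular_value (F z) k = singular_value (F w) k)"
    using c1 sv_eq by blast
  have i2: "C \<longleftrightarrow> (\<forall>k\<in>{1..n}. \<exists>zk\<in>\<Omega>. \<forall>z\<in>\<Omega>. singular_value (F z) k \<le> singular_value (F zk) k)"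
    using c2 sv_max by blast
  have i3: "C \<longleftrightarrow> (\<forall>z\<in>\<Omega>. \<forall>w\<in>\<Omega>. frobenius_norm (F z) = frobenius_norm (F w))"
    using c3 d3 by blast
  have i4: "C \<longleftrightarrow> (\<exists>z0\<in>\<Omega>. \<forall>z\<in>\<Omega>. frobenius_norm (F z) \<le> frobenius_norm (F z0))"
    using c4 frob_max by blast
  show ?thesis unfolding C_def[symmetric] using i1 i2 i3 i4 by (intro conjI)
qed


end
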